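(* Consider the system $x^+=f(x)$, $y=h(x)$ with $f:\mathcal{X}\to\mathcal{X}$, $h:\mathcal{X}\to\mathcal{Y}$, $\mathcal{X}\subset\mathbb{R}^n$, $\mathcal{Y}\subset\mathbb{R}^m$. Suppose: (A1) there exists an integer $p\ge1$ such that for every $x\in\mathcal{X}$ the set $[x]_{p-1}$ is either a singleton or empty; and (A2) for all $x,\hat x\in\mathcal{X}$ and all $k\in\{0,1,2,\ldots\}$, $\hat x\in[x]_k^+$ implies $[\hat x]_k^+=[x]_k^+$. Let $p$ be as in (A1) and define $\pi:\mathcal{X}\times\mathcal{Y}\to\{-1,0,1,\ldots,p-2\}$ by $$\pi(\hat x,y):=\max\{\,j\in\{-1,0,\ldots,p-2\}:\ [\hat x]_j^+\cap h^{-1}(y)\neq\emptyset\,\}.$$ Then the system $$\hat x^+\in f\big([\hat x]^+_{\pi(\hat x,y)}\cap h^{-1}(y)\big)$$ is a deadbeat observer for $x^+=f(x)$, $y=h(x)$.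
   Context: Inverse images are set-valued: $f^{-1}(x):=\{\eta\in\mathcal{X}: f(\eta)=x\}$ (empty if $x\notin f(\mathcal{X})$), $h^{-1}(y):=\{\eta\in\mathcal{X}:h(\eta)=y\}$; images of sets are $f(S)=\{f(s):s\in S\}$ and for a set $S$, $[S]_k:=\bigcup_{s\in S}[s]_k$. Define $[x]_0:=h^{-1}(h(x))$, and for $k\ge0$: $[x]_k^+:=f([f^{-1}(x)]_k)$, $[x]_{k+1}:=[x]_k^+\cap[x]_0$; additionally $[x]_{-1}^+:=\mathcal{X}$. Solutions: $\phi(0,x)=x$, $\phi(k+1,x)=f(\phi(k,x))$. Given $g:\mathcal{X}\times\mathcal{Y}\rightrightarrows\mathcal{X}$, a solution of $\hat x^+\in g(\hat x,h(x))$ driven by $x^+=f(x)$ is any sequence $\psi(k,\hat x,x)$ with $\psi(0,\hat x,x)=\hat x$, $\psi(k+1,\hat x,x)\in g(\psi(k,\hat x,x),h(\phi(k,x)))$. The system $\hat x^+\in g(\hat x,y)$ is a deadbeat observer if there is an integer $q\ge1$ such that all such solutions satisfy $\psi(k,\hat x,x)=\phi(k,x)$ for all $x,\hat x\in\mathcal{X}$ and $k\ge q$. *)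

theory Defs
  imports "HOL-Analysis.Analysis"
begin

text \<open>Indistinguishability sets, relativised to the state set X.
  cls X f h k x is [x]_k ; clsp X f h k x is [x]_k^+ (k >= 0).\<close>

fun cls :: "'a set \<Rightarrow> ('a \<Rightarrow> 'a) \<Rightarrow> ('a \<Rightarrow> 'b) \<Rightarrow> nat \<Rightarrow> 'a \<Rightarrow> 'a set" where
  "cls X f h 0 x = {\<eta>\<in>X. h \<eta> = h x}"
| "cls X f h (Suc k) x =
     (f ` (\<Union>s\<in>{\<eta>\<in>X. f \<eta> = x}. cls X f h k s)) \<inter> cls X f h 0 x"

definition clsp :: "'a set \<Rightarrow> ('a \<Rightarrow> 'a) \<Rightarrow> ('a \<Rightarrow> 'b) \<Rightarrow> nat \<Rightarrow> 'a \<Rightarrow> 'a set" where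
  "clsp X f h k x = f ` (\<Union>s\<in>{\<eta>\<in>X. f \<eta> = x}. cls X f h k s)"

definition clsp_int :: "'a set \<Rightarrow> ('a \<Rightarrow> 'a) \<Rightarrow> ('a \<Rightarrow> 'b) \<Rightarrow> int \<Rightarrow> 'a \<Rightarrow> 'a set" where
  "clsp_int X f h j x = (if j = -1 then X else clsp X f h (nat j) x)"

definition obs_index :: "'a set \<Rightarrow> ('a \<Rightarrow> 'a) \<Rightarrow> ('a \<Rightarrow> 'b) \<Rightarrow> nat \<Rightarrow> 'a \<Rightarrow> 'b \<Rightarrow> int" where
  "obs_index X f h p xh y =
     Max {j \<in> {-1 .. int p - 2}. clsp_int X f h j xh \<inter> {\<eta>\<in>X. h \<eta> = y} \<noteq> {}}"

definition observer_map :: "'a set \<Rightarrow> ('a \<Rightarrow> 'a) \<Rightarrow> ('a \<Rightarrow> 'b) \<Rightarrow> nat \<Rightarrow> 'a \<Rightarrow> 'b \<Rightarrow> 'a set" where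
  "observer_map X f h p xh y =
     f ` (clsp_int X f h (obs_index X f h p xh y) xh \<inter> {\<eta>\<in>X. h \<eta> = y})"

definition deadbeat_observer ::
  "'a set \<Rightarrow> ('a \<Rightarrow> 'a) \<Rightarrow> ('a \<Rightarrow> 'b) \<Rightarrow> ('a \<Rightarrow> 'b \<Rightarrow> 'a set) \<Rightarrow> bool" where
  "deadbeat_observer X f h g \<longleftrightarrow>
     (\<exists>q::nat. q \<ge> 1 \<and>
        (\<forall>x\<in>X. \<forall>xh\<in>X. \<forall>\<psi>::nat \<Rightarrow> 'a.
           (\<psi> 0 = xh \<and> (\<forall>k. \<psi> (Suc k) \<in> g (\<psi> k) (h ((f ^^ k) x))))
           \<longrightarrow> (\<forall>k\<ge>q. \<psi> k = (f ^^ k) x)))"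

end

theory Submission
  imports Defs
begin

lemma cls_sub: "cls X f h k x \<subseteq> X"
  by (cases k) auto

lemma cls_Suc_sub: "cls X f h (Suc k) x \<subseteq> cls X f h k x"
proof (induction k arbitrary: x)
  case 0
  then show ?case by auto
next
  case (Suc k)
  have "f ` (\<Union>s\<in>{\<eta>\<in>X. f \<eta> = x}. cls X f h (Suc k) s) \<subseteq> f ` (\<Union>s\<in>{\<eta>\<in>X. f \<eta> = x}. cls X f h k s)"
    using Suc by (intro image_mono UN_mono) auto
  then show ?case unfolding cls.simps(2)[of X f h "Suc k"] cls.simps(2)[of X f h k] by (rule Int_mono) simp
qed

lemma cls_anti: "j \<le> i \<Longrightarrow> cls X f h i x \<subseteq> cls X f h j x"
proof (induction i)
  case 0 then show ?case by simp
next
  case (Suc i)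
  show ?case
  proof (cases "j = Suc i")
    case False
    then have "j \<le> i" using Suc.prems by simp
    then show ?thesis using Suc.IH cls_Suc_sub[of X f h i x] by (rule_tac subset_trans) auto
  qed simp
qed

lemma clsp_anti: "j \<le> i \<Longrightarrow> clsp X f h i x \<subseteq> clsp X f h j x"
  unfolding clsp_def using cls_anti[of j i X f h] by blast

lemma clsp_sub: assumes "\<forall>x\<in>X. f x \<in> X" shows "clsp X f h k x \<subseteq> X"
proof
  fix y assume "y \<in> clsp X f h k x"
  then obtain s t where st: "s \<in> cls X f h k t" "y = f s" unfolding clsp_def by blast
  have "s \<in> X" using st(1) cls_sub by (metis subsetD)
  then show "y \<in> X" using st(2) assms by simp
qed

lemma cls_Suc_eq: "cls X f h (Suc k) x = clsp X f h k x \<inter> cls X f h 0 x"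
  by (simp add: clsp_def)

lemma orbit_in: "x \<in> X \<Longrightarrow> \<forall>x\<in>X. f x \<in> X \<Longrightarrow> (f ^^ k) x \<in> X"
  by (induction k) auto

lemma orbit_cls:
  assumes x: "x \<in> X" and fX: "\<forall>x\<in>X. f x \<in> X"
  shows "j \<le> k \<Longrightarrow> (f ^^ k) x \<in> cls X f h j ((f ^^ k) x)"
proof (induction k arbitrary: j)
  case 0 then show ?case using x by simp
next
  case (Suc k)
  have inX: "(f ^^ Suc k) x \<in> X" using orbit_in[OF x fX] .
  have b: "(f ^^ k) x \<in> X" using orbit_in[OF x fX] .
  show ?case
  proof (cases j)
    case 0 then show ?thesis using inX by simp
  next
    case (Suc j')
    then have "j' \<le> k" using Suc.prems by simp
    then have a: "(f ^^ k) x \<in> cls X f h j' ((f ^^ k) x)" by (rule Suc.IH)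
    have "(f ^^ Suc k) x \<in> f ` (\<Union>s\<in>{\<eta>\<in>X. f \<eta> = (f ^^ Suc k) x}. cls X f h j' s)"
    proof (rule image_eqI)
      show "(f ^^ Suc k) x = f ((f ^^ k) x)" by simp
      show "(f ^^ k) x \<in> (\<Union>s\<in>{\<eta>\<in>X. f \<eta> = (f ^^ Suc k) x}. cls X f h j' s)"
        using a b by auto
    qed
    moreover have "(f ^^ Suc k) x \<in> cls X f h 0 ((f ^^ Suc k) x)" using inX by simp
    ultimately show ?thesis unfolding Suc cls.simps(2) by blast
  qed
qed

lemma obs_index_ge:
  assumes "j + 2 \<le> p" and "clsp X f h j z \<inter> {\<eta>\<in>X. h \<eta> = y} \<noteq> {}"
  shows "clsp_int X f h (obs_index X f h p z y) z \<subseteq> clsp X f h j z"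
proof -
  define S where "S = {j \<in> {-1 .. int p - 2}. clsp_int X f h j z \<inter> {\<eta>\<in>X. h \<eta> = y} \<noteq> {}}"
  have fin: "finite S" unfolding S_def by (rule finite_subset[of _ "{-1..int p - 2}"]) auto
  have "int j \<in> S" using assms unfolding S_def clsp_int_def by auto
  then have ge: "int j \<le> Max S" using fin by simp
  have "obs_index X f h p z y = Max S" unfolding obs_index_def S_def by simp
  moreover have "clsp_int X f h (Max S) z = clsp X f h (nat (Max S)) z"
    using ge unfolding clsp_int_def by auto
  moreover have "j \<le> nat (Max S)" using ge by simp
  ultimately show ?thesis using clsp_anti by metis
qed

theorem theorem3:
  fixes X :: "(real ^ 'n) set" and Y :: "(real ^ 'm) set"
    and f :: "real ^ 'n \<Rightarrow> real ^ 'n" and h :: "real ^ 'n \<Rightarrow> real ^ 'm"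
    and p :: nat
  assumes f_into: "\<forall>x\<in>X. f x \<in> X"
    and h_into: "\<forall>x\<in>X. h x \<in> Y"
    and p_ge: "p \<ge> 1"
    and A1: "\<forall>x\<in>X. (\<exists>a. cls X f h (p - 1) x = {a}) \<or> cls X f h (p - 1) x = {}"
    and A2: "\<forall>x\<in>X. \<forall>xh\<in>X. \<forall>k::nat.
               xh \<in> clsp X f h k x \<longrightarrow> clsp X f h k xh = clsp X f h k x"
  shows "deadbeat_observer X f h (observer_map X f h p)"
  unfolding deadbeat_observer_def
proof (intro exI[of _ p] conjI ballI allI impI)
  show "1 \<le> p" by (rule p_ge)
  fix x xh and \<psi> :: "nat \<Rightarrow> real ^ 'n" and k
  assume x: "x \<in> X" and xh: "xh \<in> X"
    and H: "\<psi> 0 = xh \<and> (\<forall>k. \<psi> (Suc k) \<in> observer_map X f h p (\<psi> k) (h ((f ^^ k) x)))"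
    and kp: "p \<le> k"
  define xk where "xk k = (f ^^ k) x" for k
  have xkX: "xk k \<in> X" for k unfolding xk_def using orbit_in[OF x f_into] .
  have xkS: "xk (Suc k) = f (xk k)" for k unfolding xk_def by simp
  have step: "\<exists>\<eta>. \<psi> (Suc k) = f \<eta> \<and> \<eta> \<in> clsp_int X f h (obs_index X f h p (\<psi> k) (h (xk k))) (\<psi> k)
      \<and> \<eta> \<in> X \<and> h \<eta> = h (xk k)" for k
  proof -
    have "\<psi> (Suc k) \<in> observer_map X f h p (\<psi> k) (h (xk k))"
      using H by (simp add: xk_def)
    then obtain \<eta> where "\<psi> (Suc k) = f \<eta>" and
      "\<eta> \<in> clsp_int X f h (obs_index X f h p (\<psi> k) (h (xk k))) (\<psi> k) \<inter> {\<eta>\<in>X. h \<eta> = h (xk k)}"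
      unfolding observer_map_def by (rule imageE)
    then show ?thesis by blast
  qed
  have claim: "\<exists>\<eta>. \<psi> (Suc k) = f \<eta> \<and> \<eta> \<in> cls X f h (min k (p - 1)) (xk k)" for k
  proof (induction k)
    case 0
    obtain \<eta> where "\<psi> (Suc 0) = f \<eta>" "\<eta> \<in> X" "h \<eta> = h (xk 0)" using step[of 0] by blast
    then have "\<psi> (Suc 0) = f \<eta> \<and> \<eta> \<in> cls X f h (min 0 (p - 1)) (xk 0)" by simp
    then show ?case by blast
  next
    case (Suc k)
    obtain \<eta>0 where e0: "\<psi> (Suc k) = f \<eta>0" "\<eta>0 \<in> cls X f h (min k (p - 1)) (xk k)"
      using Suc by blast
    obtain \<eta> where e: "\<psi> (Suc (Suc k)) = f \<eta>"
      "\<eta> \<in> clsp_int X f h (obs_index X f h p (\<psi> (Suc k)) (h (xk (Suc k)))) (\<psi> (Suc k))"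
      "\<eta> \<in> X" "h \<eta> = h (xk (Suc k))"
      using step[of "Suc k"] by blast
    have e0c: "\<eta> \<in> cls X f h 0 (xk (Suc k))" using e by simp
    show ?case
    proof (cases "min (Suc k) (p - 1)")
      case 0 then show ?thesis using e(1) e0c by (intro exI[of _ \<eta>]) simp
    next
      case (Suc j)
      then have jk: "j \<le> k" and jp: "j + 2 \<le> p" and jm: "j \<le> min k (p - 1)" by auto
      have "\<psi> (Suc k) \<in> clsp X f h (min k (p - 1)) (xk (Suc k))"
        unfolding clsp_def
      proof (rule image_eqI)
        show "\<psi> (Suc k) = f \<eta>0" by (rule e0(1))
        show "\<eta>0 \<in> (\<Union>s\<in>{\<eta>\<in>X. f \<eta> = xk (Suc k)}. cls X f h (min k (p - 1)) s)"
        proof (rule UN_I[of "xk k"])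
          show "xk k \<in> {\<eta>\<in>X. f \<eta> = xk (Suc k)}" using xkX[of k] xkS[of k] by simp
        qed (rule e0(2))
      qed
      then have ps: "\<psi> (Suc k) \<in> clsp X f h j (xk (Suc k))" by (rule subsetD[OF clsp_anti[OF jm]])
      have psX: "\<psi> (Suc k) \<in> X" using ps clsp_sub[OF f_into] by blast
      have eq: "clsp X f h j (\<psi> (Suc k)) = clsp X f h j (xk (Suc k))"
        using A2[rule_format, OF xkX[of "Suc k"] psX ps] .
      have "xk k \<in> cls X f h j (xk k)" unfolding xk_def using orbit_cls[OF x f_into jk] .
      have "xk (Suc k) \<in> clsp X f h j (xk (Suc k))"
        unfolding clsp_def
      proof (rule image_eqI)
        show "xk (Suc k) = f (xk k)" by (rule xkS)
        show "xk k \<in> (\<Union>s\<in>{\<eta>\<in>X. f \<eta> = xk (Suc k)}. cls X f h j s)"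
        proof (rule UN_I[of "xk k"])
          show "xk k \<in> {\<eta>\<in>X. f \<eta> = xk (Suc k)}" using xkX[of k] xkS[of k] by simp
        qed (rule \<open>xk k \<in> cls X f h j (xk k)\<close>)
      qed
      then have "xk (Suc k) \<in> clsp X f h j (\<psi> (Suc k)) \<inter> {\<eta>\<in>X. h \<eta> = h (xk (Suc k))}"
        using eq xkX[of "Suc k"] by simp
      then have ne: "clsp X f h j (\<psi> (Suc k)) \<inter> {\<eta>\<in>X. h \<eta> = h (xk (Suc k))} \<noteq> {}"
        by (rule ex_in_conv[THEN iffD1, OF exI])
      have "\<eta> \<in> clsp X f h j (\<psi> (Suc k))"
        by (rule subsetD[OF obs_index_ge[OF jp ne] e(2)])
      then have "\<eta> \<in> clsp X f h j (xk (Suc k))" using eq by simp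
      then have "\<eta> \<in> cls X f h (Suc j) (xk (Suc k))" unfolding cls_Suc_eq using e0c by (rule IntI)
      then have "\<eta> \<in> cls X f h (min (Suc k) (p - 1)) (xk (Suc k))" unfolding Suc .
      then show ?thesis using e(1) by blast
    qed
  qed
  obtain k' where k': "k = Suc k'" using kp p_ge by (cases k) auto
  then have mk: "min k' (p - 1) = p - 1" using kp by simp
  obtain \<eta> where e: "\<psi> k = f \<eta>" "\<eta> \<in> cls X f h (p - 1) (xk k')"
    using claim[of k'] k' mk by auto
  have "xk k' \<in> cls X f h (p - 1) (xk k')" unfolding xk_def
    by (rule orbit_cls[OF x f_into]) (use kp k' in simp)
  then have "\<eta> = xk k'" using A1[rule_format, OF xkX[of k']] e(2) by (metis empty_iff singletonD)
  then show "\<psi> k = (f ^^ k) x" using e k' xkS unfolding xk_def by simp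
qed

end
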